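(* Let $W_1\subseteq C_1^\omega$ and $W_2\subseteq C_2^\omega$ be prefix-independent objectives over disjoint sets of colours $C_1,C_2$, let $\kappa$ be a cardinal, and let $(U_1,\le_1)$ and $(U_2,\le_2)$ be well-monotone graphs which are respectively $(\kappa,W_1)$-universal and $(\kappa,W_2)$-universal for prefix-independent objectives. Then the lexicographical product $U_1\ltimes U_2$ is monotone and $(\kappa,W_1\ltimes W_2)$-universal for prefix-independent objectives.
   Context: A $D$-pregraph: vertex set $V(G)$, edges $E(G)\subseteq V(G)\times D\times V(G)$ written $v\xrightarrow{c}v'$; a $D$-graph if every vertex has an outgoing edge; a $D$-pretree is a $D$-pregraph with root $t_0$ such that each vertex has a unique path from $t_0$. A morphism maps vertices so edges go to edges of the same colour. A (pre)graph satisfies an objective $W$ if every infinite path from every vertex has colour sequence in $W$. $W$ is prefix-independent if $uw\in W\iff w\in W$. A $D$-graph $U$ is $(\kappa,W)$-universal for prefix-independent objectives if $U$ satisfies $W$ and every $D$-pretree of cardinality $<\kappa$ satisfying $W$ admits a morphism into $U$. A partially ordered graph is monotone if $u\ge v\xrightarrow{c}v'\ge u'$ implies $u\xrightarrow{c}u'$, well-monotone if moreover the order is well-founded. Let $C=C_1\sqcup C_2$. For $w\in C^\omega$ let $w^1,w^2$ be the subsequences of letters from $C_1$, resp. $C_2$. $W_1\ltimes W_2=\{w\in C^\omega: (w^2\text{ infinite and }w^2\in W_2)\text{ or }(w^2\text{ finite and }w^1\in W_1)\}$. For a $C_1$-graph $(U_1,\le_1)$ and a $C_2$-graph $(U_2,\le_2)$,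 $U=U_1\ltimes U_2$ is the $C$-graph on $V(U_1)\times V(U_2)$ ordered by $(u_1,u_2)\le(u_1',u_2')\iff u_2<_2u_2'$ or ($u_2=u_2'$ and $u_1\le_1u_1'$), with edges $(u_1,u_2)\xrightarrow{c_1}(u_1',u_2')$ for $c_1\in C_1$ whenever $u_2>_2u_2'$ or ($u_2=u_2'$ and $u_1\xrightarrow{c_1}u_1'\in E(U_1)$), and $(u_1,u_2)\xrightarrow{c_2}(u_1',u_2')$ for $c_2\in C_2$ whenever $u_2\xrightarrow{c_2}u_2'\in E(U_2)$. *)

theory Defs
  imports Main "HOL-Library.Infinite_Set"
begin

text \<open>D-pregraphs: a vertex set and a set of coloured edges. The set of colours D is the
  whole colour type.\<close>
record ('v, 'd) pregraph =
  verts :: "'v set"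
  edges :: "('v \<times> 'd \<times> 'v) set"

definition is_pregraph :: "('v, 'd) pregraph \<Rightarrow> bool" where
  "is_pregraph G \<longleftrightarrow> (\<forall>(v, c, v') \<in> edges G. v \<in> verts G \<and> v' \<in> verts G)"

definition is_graph :: "('v, 'd) pregraph \<Rightarrow> bool" where
  "is_graph G \<longleftrightarrow> is_pregraph G \<and> (\<forall>v \<in> verts G. \<exists>c v'. (v, c, v') \<in> edges G)"

fun fpath :: "('v, 'd) pregraph \<Rightarrow> 'v \<Rightarrow> ('v \<times> 'd \<times> 'v) list \<Rightarrow> 'v \<Rightarrow> bool" where
  "fpath G u [] v \<longleftrightarrow> u = v \<and> u \<in> verts G"
| "fpath G u ((a, c, b) # p) v \<longleftrightarrow> a = u \<and> (a, c, b) \<in> edges G \<and> fpath G b p v"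

definition is_pretree :: "('v, 'd) pregraph \<Rightarrow> 'v \<Rightarrow> bool" where
  "is_pretree T t0 \<longleftrightarrow> is_pregraph T \<and> t0 \<in> verts T \<and>
     (\<forall>v \<in> verts T. \<exists>!p. fpath T t0 p v)"

definition is_morphism :: "('v \<Rightarrow> 'w) \<Rightarrow> ('v, 'd) pregraph \<Rightarrow> ('w, 'd) pregraph \<Rightarrow> bool" where
  "is_morphism f G H \<longleftrightarrow> (\<forall>v \<in> verts G. f v \<in> verts H) \<and>
     (\<forall>(v, c, v') \<in> edges G. (f v, c, f v') \<in> edges H)"

definition satisfies :: "('v, 'd) pregraph \<Rightarrow> (nat \<Rightarrow> 'd) set \<Rightarrow> bool" where
  "satisfies G W \<longleftrightarrow> (\<forall>vs cs. (\<forall>i. (vs i, cs i, vs (Suc i)) \<in> edges G) \<longrightarrow> cs \<in> W)"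

definition prepend :: "'d list \<Rightarrow> (nat \<Rightarrow> 'd) \<Rightarrow> (nat \<Rightarrow> 'd)" where
  "prepend u w = (\<lambda>i. if i < length u then u ! i else w (i - length u))"

definition prefix_independent :: "(nat \<Rightarrow> 'd) set \<Rightarrow> bool" where
  "prefix_independent W \<longleftrightarrow> (\<forall>u w. prepend u w \<in> W \<longleftrightarrow> w \<in> W)"

text \<open>(kappa, W)-universality for prefix-independent objectives. kappa is a cardinal given as
  a (cardinal) well-order on the type 'k. Since morphism existence only depends on the
  isomorphism type of a pretree, and every set of cardinality < kappa injects into the
  field of kappa, it suffices (and is equivalent) to quantify over pretrees whose vertices
  are taken from the type 'k.\<close>
definition universal :: "'k rel \<Rightarrow> (nat \<Rightarrow> 'd) set \<Rightarrow> ('u, 'd) pregraph \<Rightarrow> bool" where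
  "universal \<kappa> W U \<longleftrightarrow> is_graph U \<and> satisfies U W \<and>
     (\<forall>(T :: ('k, 'd) pregraph) t0.
        is_pretree T t0 \<and> (card_of (verts T), \<kappa>) \<in> ordLess \<and> satisfies T W
        \<longrightarrow> (\<exists>f. is_morphism f T U))"

definition monotone_graph :: "('v, 'd) pregraph \<Rightarrow> 'v rel \<Rightarrow> bool" where
  "monotone_graph G R \<longleftrightarrow> partial_order_on (verts G) R \<and>
     (\<forall>u v v' u' c. (v, u) \<in> R \<and> (v, c, v') \<in> edges G \<and> (u', v') \<in> R
        \<longrightarrow> (u, c, u') \<in> edges G)"

definition well_monotone :: "('v, 'd) pregraph \<Rightarrow> 'v rel \<Rightarrow> bool" where
  "well_monotone G R \<longleftrightarrow> monotone_graph G R \<and> wf (R - Id)"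

text \<open>Colours C = C1 \<sqcup> C2 are represented by the sum type 'c1 + 'c2.
  w^1, w^2: subsequences of the C1- resp. C2-letters (only used when infinite).\<close>
definition sub1 :: "(nat \<Rightarrow> 'c1 + 'c2) \<Rightarrow> nat \<Rightarrow> 'c1" where
  "sub1 w n = projl (w (Infinite_Set.enumerate {i. isl (w i)} n))"

definition sub2 :: "(nat \<Rightarrow> 'c1 + 'c2) \<Rightarrow> nat \<Rightarrow> 'c2" where
  "sub2 w n = projr (w (Infinite_Set.enumerate {i. \<not> isl (w i)} n))"

definition lex_obj :: "(nat \<Rightarrow> 'c1) set \<Rightarrow> (nat \<Rightarrow> 'c2) set \<Rightarrow> (nat \<Rightarrow> 'c1 + 'c2) set" where
  "lex_obj W1 W2 = {w. (infinite {i. \<not> isl (w i)} \<and> sub2 w \<in> W2) \<or>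
                        (finite {i. \<not> isl (w i)} \<and> sub1 w \<in> W1)}"

definition lex_graph :: "('v1, 'c1) pregraph \<Rightarrow> 'v1 rel \<Rightarrow> ('v2, 'c2) pregraph \<Rightarrow> 'v2 rel
    \<Rightarrow> ('v1 \<times> 'v2, 'c1 + 'c2) pregraph" where
  "lex_graph U1 R1 U2 R2 =
     \<lparr> verts = verts U1 \<times> verts U2,
       edges = {((u1, u2), Inl c1, (u1', u2')) | u1 u2 c1 u1' u2'.
                  (u1, u2) \<in> verts U1 \<times> verts U2 \<and> (u1', u2') \<in> verts U1 \<times> verts U2 \<and>
                  (((u2', u2) \<in> R2 \<and> u2' \<noteq> u2) \<or> (u2 = u2' \<and> (u1, c1, u1') \<in> edges U1))}
             \<union> {((u1, u2), Inr c2, (u1', u2')) | u1 u2 c2 u1' u2'.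
                  (u1, u2) \<in> verts U1 \<times> verts U2 \<and> (u1', u2') \<in> verts U1 \<times> verts U2 \<and>
                  (u2, c2, u2') \<in> edges U2} \<rparr>"

definition lex_order :: "('v1, 'c1) pregraph \<Rightarrow> 'v1 rel \<Rightarrow> ('v2, 'c2) pregraph \<Rightarrow> 'v2 rel
    \<Rightarrow> ('v1 \<times> 'v2) rel" where
  "lex_order U1 R1 U2 R2 =
     {((u1, u2), (u1', u2')) | u1 u2 u1' u2'.
        (u1, u2) \<in> verts U1 \<times> verts U2 \<and> (u1', u2') \<in> verts U1 \<times> verts U2 \<and>
        (((u2, u2') \<in> R2 \<and> u2 \<noteq> u2') \<or> (u2 = u2' \<and> (u1, u1') \<in> R1))}"

end

theory Submission
  imports Defs
begin

lemma enum_gap: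
  fixes S :: "nat set"
  assumes "infinite S" "enumerate S n < m" "m < enumerate S (Suc n)"
  shows "m \<notin> S"
  using assms enumerate_Suc''[OF assms(1), of n] not_less_Least by fastforce

lemma enum_tail:
  fixes S :: "nat set"
  assumes inf: "infinite S" and M: "\<forall>n\<ge>M. n \<in> S"
  shows "\<exists>k. \<forall>n. enumerate S (k+n) = M+n"
proof -
  obtain k where k: "enumerate S k = M" using enumerate_Ex[OF inf] M by blast
  have "enumerate S (k+n) = M+n" for n
  proof (induction n)
    case 0 then show ?case using k by simp
  next
    case (Suc n)
    have "enumerate S (Suc (k+n)) = (LEAST s. s \<in> S \<and> enumerate S (k+n) < s)"
      using enumerate_Suc''[OF inf] by blast
    also have "\<dots> = M + Suc n"
      using Suc M by (intro Least_equality) auto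
    finally show ?case by simp
  qed
  then show ?thesis by blast
qed

lemma enum_range:
  fixes f :: "nat \<Rightarrow> nat"
  assumes sm: "strict_mono f"
  shows "enumerate (range f) n = f n"
proof -
  have inf: "infinite (range f)"
    using sm strict_mono_imp_inj_on range_inj_infinite by blast
  show ?thesis
  proof (induction n)
    case 0
    have "(LEAST n. n \<in> range f) = f 0"
      using sm by (intro Least_equality) (auto simp: strict_mono_less_eq)
    then show ?case by (simp add: enumerate_0)
  next
    case (Suc n)
    have "enumerate (range f) (Suc n) = (LEAST s. s \<in> range f \<and> enumerate (range f) n < s)"
      using enumerate_Suc''[OF inf] by blast
    also have "\<dots> = f (Suc n)"
      using Suc sm
      by (intro Least_equality) (auto simp: strict_mono_less strict_mono_less_eq Suc_le_eq)
    finally show ?case .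
  qed
qed

lemma prepend_split: "prepend (map w [0..<k]) (\<lambda>n. w (k+n)) = w"
  by (rule ext) (simp add: prepend_def)

lemma lex_monotone:
  assumes m1: "monotone_graph U1 R1" and m2: "monotone_graph U2 R2"
  shows "monotone_graph (lex_graph U1 R1 U2 R2) (lex_order U1 R1 U2 R2)"
proof -
  have p1: "partial_order_on (verts U1) R1" and p2: "partial_order_on (verts U2) R2"
    using m1 m2 by (auto simp: monotone_graph_def)
  note P1 = partial_order_onD[OF p1] and P2 = partial_order_onD[OF p2]
  have po: "partial_order_on (verts (lex_graph U1 R1 U2 R2)) (lex_order U1 R1 U2 R2)"
    unfolding partial_order_on_def preorder_on_def
  proof (intro conjI)
    show "lex_order U1 R1 U2 R2 \<subseteq> verts (lex_graph U1 R1 U2 R2) \<times> verts (lex_graph U1 R1 U2 R2)"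
      by (auto simp: lex_order_def lex_graph_def)
    show "refl_on (verts (lex_graph U1 R1 U2 R2)) (lex_order U1 R1 U2 R2)"
      using P1(1) by (auto simp: lex_order_def lex_graph_def refl_on_def)
    show "trans (lex_order U1 R1 U2 R2)"
      unfolding trans_def lex_order_def using P1(2,3) P2(2,3)
      apply (clarsimp)
      by (smt (verit) antisymD transD)
    show "antisym (lex_order U1 R1 U2 R2)"
      unfolding antisym_def lex_order_def using P1(3) P2(3)
      by (auto dest: antisymD)
  qed
  show ?thesis
    unfolding monotone_graph_def
  proof (intro conjI po allI impI)
    fix u v v' u' c
    assume a: "(v, u) \<in> lex_order U1 R1 U2 R2 \<and> (v, c, v') \<in> edges (lex_graph U1 R1 U2 R2) \<and>
      (u', v') \<in> lex_order U1 R1 U2 R2"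
    obtain v1 v2 u1 u2 v1' v2' u1' u2' where eq: "v = (v1,v2)" "u = (u1,u2)" "v' = (v1',v2')" "u' = (u1',u2')"
      by (cases u, cases v, cases u', cases v') auto
    have vu: "((v2, u2) \<in> R2 \<and> v2 \<noteq> u2) \<or> (v2 = u2 \<and> (v1, u1) \<in> R1)"
      and uv': "((u2', v2') \<in> R2 \<and> u2' \<noteq> v2') \<or> (u2' = v2' \<and> (u1', v1') \<in> R1)"
      and inV: "u1 \<in> verts U1" "u2 \<in> verts U2" "u1' \<in> verts U1" "u2' \<in> verts U2"
      using a by (auto simp: lex_order_def eq)
    have vu2: "(v2, u2) \<in> R2" using vu P2(1) inV by (auto simp: refl_on_def)
    have uv2: "(u2', v2') \<in> R2" using uv' P2(1) inV by (auto simp: refl_on_def)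
    show "(u, c, u') \<in> edges (lex_graph U1 R1 U2 R2)"
    proof (cases c)
      case (Inr c2)
      then have "(v2, c2, v2') \<in> edges U2" using a by (auto simp: lex_graph_def eq)
      then have "(u2, c2, u2') \<in> edges U2" using m2 vu2 uv2 unfolding monotone_graph_def by blast
      then show ?thesis using inV Inr by (auto simp: lex_graph_def eq)
    next
      case (Inl c1)
      then have e: "((v2', v2) \<in> R2 \<and> v2' \<noteq> v2) \<or> (v2 = v2' \<and> (v1, c1, v1') \<in> edges U1)"
        using a by (auto simp: lex_graph_def eq)
      have r: "(u2', u2) \<in> R2"
        using e vu2 uv2 P2(2) by (meson transD)
      show ?thesis
      proof (cases "u2' = u2")
        case False
        then show ?thesis using r inV Inl by (auto simp: lex_graph_def eq)
      next
        case True
        have vv: "v2' = v2" using e vu2 uv2 True P2(2,3) by (metis antisymD transD)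
        then have "v2 = u2" "u2' = v2'" using vu2 uv2 True P2(3) e by (metis antisymD)+
        then have "(v1, u1) \<in> R1" "(u1', v1') \<in> R1" "(v1, c1, v1') \<in> edges U1"
          using vu uv' e vv by auto
        then have "(u1, c1, u1') \<in> edges U1" using m1 unfolding monotone_graph_def by blast
        then show ?thesis using True inV Inl by (auto simp: lex_graph_def eq)
      qed
    qed
  qed
qed

lemma lex_edge_Inl:
  "((a,b), Inl c, (a',b')) \<in> edges (lex_graph U1 R1 U2 R2) \<longleftrightarrow>
    a \<in> verts U1 \<and> b \<in> verts U2 \<and> a' \<in> verts U1 \<and> b' \<in> verts U2 \<and>
    (((b', b) \<in> R2 \<and> b' \<noteq> b) \<or> (b = b' \<and> (a, c, a') \<in> edges U1))"
  by (auto simp: lex_graph_def)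

lemma lex_edge_Inr:
  "((a,b), Inr c, (a',b')) \<in> edges (lex_graph U1 R1 U2 R2) \<longleftrightarrow>
    a \<in> verts U1 \<and> b \<in> verts U2 \<and> a' \<in> verts U1 \<and> b' \<in> verts U2 \<and>
    (b, c, b') \<in> edges U2"
  by (auto simp: lex_graph_def)

lemma lex_is_graph:
  assumes "is_graph U1" "is_graph U2"
  shows "is_graph (lex_graph U1 R1 U2 R2)"
  unfolding is_graph_def is_pregraph_def
proof (intro conjI ballI)
  show "\<And>x. x \<in> edges (lex_graph U1 R1 U2 R2) \<Longrightarrow>
         case x of (v, c, v') \<Rightarrow> v \<in> verts (lex_graph U1 R1 U2 R2) \<and> v' \<in> verts (lex_graph U1 R1 U2 R2)"
    by (auto simp: lex_graph_def)
next
  fix v assume v: "v \<in> verts (lex_graph U1 R1 U2 R2)"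
  obtain a b where ab: "v = (a,b)" "a \<in> verts U1" "b \<in> verts U2" using v by (auto simp: lex_graph_def)
  obtain c a' where e: "(a, c, a') \<in> edges U1" using assms(1) ab unfolding is_graph_def by blast
  have "a' \<in> verts U1" using assms(1) e unfolding is_graph_def is_pregraph_def by blast
  then have "(v, Inl c, (a', b)) \<in> edges (lex_graph U1 R1 U2 R2)"
    using ab e by (simp add: lex_edge_Inl)
  then show "\<exists>c v'. (v, c, v') \<in> edges (lex_graph U1 R1 U2 R2)" by blast
qed

lemma lex_satisfies:
  assumes wm1: "well_monotone U1 R1" and wm2: "well_monotone U2 R2"
    and s1: "satisfies U1 W1" and s2: "satisfies U2 W2" and pi1: "prefix_independent W1"
  shows "satisfies (lex_graph U1 R1 U2 R2) (lex_obj W1 W2)"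
  unfolding satisfies_def
proof (intro allI impI)
  fix vs cs
  assume E: "\<forall>i. (vs i, cs i, vs (Suc i)) \<in> edges (lex_graph U1 R1 U2 R2)"
  define x where "x i = fst (vs i)" for i
  define y where "y i = snd (vs i)" for i
  have m2: "monotone_graph U2 R2" and wf2: "wf (R2 - Id)" using wm2 by (auto simp: well_monotone_def)
  have m1: "monotone_graph U1 R1" using wm1 by (auto simp: well_monotone_def)
  note P2 = partial_order_onD[OF conjunct1[OF m2[unfolded monotone_graph_def]]]
  have Ei: "(( x i, y i), cs i, (x (Suc i), y (Suc i))) \<in> edges (lex_graph U1 R1 U2 R2)" for i
    using E by (simp add: x_def y_def)
  have yV: "y i \<in> verts U2" for i
    using Ei[of i] by (cases "cs i") (auto simp: lex_edge_Inl lex_edge_Inr)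
  have EL: "((y (Suc i), y i) \<in> R2 \<and> y (Suc i) \<noteq> y i) \<or> (y i = y (Suc i) \<and> (x i, projl (cs i), x (Suc i)) \<in> edges U1)"
    if "isl (cs i)" for i
    using Ei[of i] that by (cases "cs i") (auto simp: lex_edge_Inl)
  have ER: "(y i, projr (cs i), y (Suc i)) \<in> edges U2" if "\<not> isl (cs i)" for i
    using Ei[of i] that by (cases "cs i") (auto simp: lex_edge_Inr)
  have chain: "(y (m + d), y m) \<in> R2" if "\<forall>i. m \<le> i \<and> i < m + d \<longrightarrow> isl (cs i)" for m d
    using that
  proof (induction d)
    case 0 then show ?case using P2(1) yV by (simp add: refl_on_def)
  next
    case (Suc d)
    then have h: "(y (m + d), y m) \<in> R2" by simp
    have "isl (cs (m+d))" using Suc.prems by simp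
    then have "(y (Suc (m + d)), y (m+d)) \<in> R2"
      using EL[of "m+d"] P2(1) yV by (auto simp: refl_on_def)
    then show ?case using h P2(2) by (auto dest: transD)
  qed
  define I where "I = {i. \<not> isl (cs i)}"
  show "cs \<in> lex_obj W1 W2"
  proof (cases "finite I")
    case False
    define p where "p = enumerate I"
    have pI: "p n \<in> I" for n using False by (simp add: p_def enumerate_in_set)
    have edge: "(y (p n), projr (cs (p n)), y (p (Suc n))) \<in> edges U2" for n
    proof -
      have e1: "(y (p n), projr (cs (p n)), y (Suc (p n))) \<in> edges U2"
        using ER pI[of n] by (simp add: I_def)
      have le: "Suc (p n) \<le> p (Suc n)" using enumerate_step[OF False] by (simp add: p_def Suc_le_eq)
      have "\<forall>i. Suc (p n) \<le> i \<and> i < Suc (p n) + (p (Suc n) - Suc (p n)) \<longrightarrow> isl (cs i)"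
        using enum_gap[OF False, of n] le by (auto simp: p_def I_def)
      then have "(y (p (Suc n)), y (Suc (p n))) \<in> R2" using chain le by fastforce
      moreover have "(y (p n), y (p n)) \<in> R2" using P2(1) yV by (simp add: refl_on_def)
      ultimately show ?thesis using m2 e1 unfolding monotone_graph_def by blast
    qed
    have "(\<lambda>n. projr (cs (p n))) \<in> W2"
      using s2[unfolded satisfies_def, rule_format, of "\<lambda>n. y (p n)" "\<lambda>n. projr (cs (p n))"] edge by blast
    then have "sub2 cs \<in> W2" by (simp add: sub2_def[abs_def] p_def I_def)
    then show ?thesis using False by (simp add: lex_obj_def I_def)
  next
    case True
    obtain N where N: "\<forall>i\<ge>N. isl (cs i)"
    proof -
      obtain k where "I \<subseteq> {..<k}" using finite_nat_bounded[OF True] by blast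
      then have "\<forall>i\<ge>k. isl (cs i)" by (auto simp: I_def)
      then show ?thesis using that by blast
    qed
    define Q where "Q = y ` {N..}"
    obtain z where z: "z \<in> Q" "\<forall>w. (w, z) \<in> R2 - Id \<longrightarrow> w \<notin> Q"
      using wfE_min[OF wf2, of "y N" Q] by (auto simp: Q_def)
    obtain M where M: "M \<ge> N" "z = y M" using z by (auto simp: Q_def)
    have const: "y n = y M" if "n \<ge> M" for n
    proof -
      have "(y (M + (n - M)), y M) \<in> R2" using chain N M by auto
      then have "(y n, y M) \<in> R2" using that by simp
      moreover have "y n \<in> Q" using that M by (auto simp: Q_def)
      ultimately show ?thesis using z M by auto
    qed
    have "(x (M+n), projl (cs (M+n)), x (Suc (M+n))) \<in> edges U1" for n
      using EL[of "M+n"] N M const[of "M+n"] const[of "Suc (M+n)"] by auto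
    then have w1: "(\<lambda>n. projl (cs (M+n))) \<in> W1"
      using s1[unfolded satisfies_def, rule_format, of "\<lambda>n. x (M+n)" "\<lambda>n. projl (cs (M+n))"] by simp
    define J where "J = {i. isl (cs i)}"
    have infJ: "infinite J"
    proof
      assume "finite J"
      then have "{N..} \<subseteq> J \<Longrightarrow> False" using infinite_Ici finite_subset by blast
      then show False using N by (auto simp: J_def)
    qed
    obtain k where k: "\<forall>n. enumerate J (k+n) = M+n"
      using enum_tail[OF infJ, of M] N M by (auto simp: J_def)
    have "(\<lambda>n. sub1 cs (k+n)) \<in> W1" using w1 k by (simp add: sub1_def J_def)
    then have "prepend (map (sub1 cs) [0..<k]) (\<lambda>n. sub1 cs (k+n)) \<in> W1"
      using pi1 by (simp add: prefix_independent_def)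
    then have "sub1 cs \<in> W1" by (simp add: prepend_split)
    then show ?thesis using True by (simp add: lex_obj_def I_def)
  qed
qed

lemma fpath_append:
  assumes pg: "is_pregraph G"
  shows "fpath G u (p @ q) v \<longleftrightarrow> (\<exists>w. fpath G u p w \<and> fpath G w q v)"
proof (induction p arbitrary: u)
  case Nil
  show ?case
  proof
    assume h: "fpath G u ([] @ q) v"
    have "u \<in> verts G"
    proof (cases q)
      case Nil then show ?thesis using h by auto
    next
      case (Cons e q')
      then show ?thesis using h pg by (cases e) (auto simp: is_pregraph_def)
    qed
    then show "\<exists>w. fpath G u [] w \<and> fpath G w q v" using h by auto
  qed auto
next
  case (Cons e p)
  then show ?case by (cases e) auto
qed

lemma fpath_snoc:
  assumes "is_pregraph G"
  shows "fpath G u (p @ [(a,c,b)]) v \<longleftrightarrow> fpath G u p a \<and> (a,c,b) \<in> edges G \<and> b = v \<and> b \<in> verts G"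
  by (auto simp: fpath_append[OF assms])

lemma fpath_verts:
  assumes "is_pregraph G" "fpath G u p v"
  shows "u \<in> verts G \<and> v \<in> verts G"
  using assms(2)
proof (induction p arbitrary: u)
  case Nil then show ?case by auto
next
  case (Cons e p)
  obtain a c b where e: "e = (a,c,b)" by (cases e)
  then show ?case using Cons assms(1) by (auto simp: is_pregraph_def)
qed

lemma fpath_edges: "fpath G u p v \<Longrightarrow> set p \<subseteq> edges G"
proof (induction p arbitrary: u)
  case (Cons e p) then show ?case by (cases e) auto
qed simp

lemma fpath_nth:
  assumes "fpath G u p v" "j < length p"
  shows "p!j \<in> edges G \<and> (j = 0 \<longrightarrow> fst (p!j) = u) \<and>
         (Suc j < length p \<longrightarrow> snd (snd (p!j)) = fst (p ! Suc j)) \<and>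
         (Suc j = length p \<longrightarrow> snd (snd (p!j)) = v)"
  using assms
proof (induction p arbitrary: u j)
  case Nil then show ?case by simp
next
  case (Cons e p)
  obtain a c b where e: "e = (a,c,b)" by (cases e)
  show ?case
  proof (cases j)
    case 0
    then show ?thesis using Cons.prems e by (cases p) auto
  next
    case (Suc j')
    have "fpath G b p v" "j' < length p" using Cons.prems e Suc by auto
    note IH = Cons.IH[OF this]
    show ?thesis unfolding Suc nth_Cons_Suc length_Cons Suc_less_eq Suc_inject
      using IH by blast
  qed
qed

lemma pretree_crit:
  fixes d :: "'v \<Rightarrow> nat"
  assumes pg: "is_pregraph G" and r: "r \<in> verts G"
    and noin: "\<And>a c. (a,c,r) \<notin> edges G"
    and inc: "\<And>v. v \<in> verts G \<Longrightarrow> v \<noteq> r \<Longrightarrow> \<exists>a c. (a,c,v) \<in> edges G"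
    and uniq: "\<And>a c v a' c'. (a,c,v) \<in> edges G \<Longrightarrow> (a',c',v) \<in> edges G \<Longrightarrow> a = a' \<and> c = c'"
    and rank: "\<And>a c b. (a,c,b) \<in> edges G \<Longrightarrow> d a < d b"
  shows "is_pretree G r"
proof -
  have ex: "v \<in> verts G \<Longrightarrow> \<exists>p. fpath G r p v" for v
  proof (induction "d v" arbitrary: v rule: less_induct)
    case less
    show ?case
    proof (cases "v = r")
      case True then show ?thesis using r by (intro exI[of _ "[]"]) simp
    next
      case False
      obtain a c where e: "(a,c,v) \<in> edges G" using inc less.prems False by blast
      have a: "a \<in> verts G" using pg e by (auto simp: is_pregraph_def)
      obtain p where "fpath G r p a" using less.hyps[OF rank[OF e] a] by blast
      then have "fpath G r (p @ [(a,c,v)]) v" using e less.prems by (simp add: fpath_snoc[OF pg])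
      then show ?thesis by blast
    qed
  qed
  have un: "\<forall>p p'. fpath G r p v \<and> fpath G r p' v \<longrightarrow> p = p'" for v
  proof (induction "d v" arbitrary: v rule: less_induct)
    case less
    show ?case
    proof (intro allI impI)
      fix p p' assume pp: "fpath G r p v \<and> fpath G r p' v"
      show "p = p'"
      proof (cases p rule: rev_exhaust)
        case Nil
        note pn = Nil
        then have "v = r" using pp by simp
        show ?thesis
        proof (cases p' rule: rev_exhaust)
          case (snoc q e)
          then show ?thesis using pp noin \<open>v = r\<close> by (cases e) (auto simp: fpath_snoc[OF pg])
        qed (simp add: Nil)
      next
        case (snoc q e)
        note sn = snoc
        obtain a c b where e: "e = (a,c,b)" by (cases e)
        have 1: "fpath G r q a" "(a,c,v) \<in> edges G" using pp snoc e by (auto simp: fpath_snoc[OF pg])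
        show ?thesis
        proof (cases p' rule: rev_exhaust)
          case Nil
          then show ?thesis using pp noin 1 by auto
        next
          case (snoc q' e')
          note snoc2 = snoc
          obtain a' c' b' where e': "e' = (a',c',b')" by (cases e')
          have 2: "fpath G r q' a'" "(a',c',v) \<in> edges G" using pp snoc2 e' by (auto simp: fpath_snoc[OF pg])
          have "a = a' \<and> c = c'" using uniq 1(2) 2(2) by blast
          moreover have "q = q'" using less.hyps[OF rank[OF 1(2)]] 1 2 calculation by blast
          ultimately show ?thesis using sn snoc2 e e' pp by (auto simp: fpath_snoc[OF pg])
        qed
      qed
    qed
  qed
  show ?thesis unfolding is_pretree_def using pg r ex un by blast
qed

definition offs :: "(nat \<Rightarrow> 'a list) \<Rightarrow> nat \<Rightarrow> nat" where
  "offs L i = (\<Sum>j<i. length (L j))"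

definition idx :: "(nat \<Rightarrow> 'a list) \<Rightarrow> nat \<Rightarrow> nat" where
  "idx L n = (LEAST i. n < offs L (Suc i))"

definition conc :: "(nat \<Rightarrow> 'a list) \<Rightarrow> nat \<Rightarrow> 'a" where
  "conc L n = L (idx L n) ! (n - offs L (idx L n))"

lemma offs_0 [simp]: "offs L 0 = 0" by (simp add: offs_def)

lemma offs_Suc [simp]: "offs L (Suc i) = offs L i + length (L i)"
  by (simp add: offs_def)

lemma offs_mono: "i \<le> i' \<Longrightarrow> offs L i \<le> offs L i'"
  unfolding offs_def by (rule sum_mono2) auto

lemma offs_ge: "\<forall>i. L i \<noteq> [] \<Longrightarrow> i \<le> offs L i"
proof (induction i)
  case (Suc i)
  then have "length (L i) \<ge> 1" by (simp add: Suc_le_eq)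
  then show ?case using Suc by simp
qed simp

lemma idx_eq:
  assumes "j < length (L i)"
  shows "idx L (offs L i + j) = i"
  unfolding idx_def
proof (rule Least_equality)
  show "offs L i + j < offs L (Suc i)" using assms by simp
next
  fix i' assume h: "offs L i + j < offs L (Suc i')"
  show "i \<le> i'"
  proof (rule ccontr)
    assume "\<not> i \<le> i'"
    then have "offs L (Suc i') \<le> offs L i" by (intro offs_mono) simp
    then show False using h by simp
  qed
qed

lemma conc_eq:
  assumes "j < length (L i)"
  shows "conc L (offs L i + j) = L i ! j"
  using idx_eq[where L=L and i=i, OF assms] by (simp add: conc_def)

lemma decomp:
  assumes ne: "\<forall>i. L i \<noteq> []"
  shows "\<exists>i j. j < length (L i) \<and> n = offs L i + j"
proof -
  define i where "i = idx L n"
  have "n < offs L (Suc n)" using offs_ge[OF ne, of "Suc n"] by simp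
  then have 1: "n < offs L (Suc i)" unfolding i_def idx_def by (rule LeastI)
  have 2: "offs L i \<le> n"
  proof (cases i)
    case 0 then show ?thesis by simp
  next
    case (Suc k)
    have "k < i" using Suc by simp
    then have "\<not> n < offs L (Suc k)" unfolding i_def idx_def by (rule not_less_Least)
    then show ?thesis using Suc by simp
  qed
  show ?thesis using 1 2 by (intro exI[of _ i] exI[of _ "n - offs L i"]) auto
qed

lemma conc_path:
  assumes pg: "is_pregraph G" and P: "\<And>i. fpath G (xs i) (L i) (xs (Suc i))"
    and ne: "\<forall>i. L i \<noteq> []"
  shows "conc L n \<in> edges G \<and> snd (snd (conc L n)) = fst (conc L (Suc n))"
proof -
  obtain i j where ij: "j < length (L i)" "n = offs L i + j" using decomp[OF ne] by blast
  note F = fpath_nth[OF P[of i] ij(1)]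
  have c: "conc L n = L i ! j" using conc_eq[where L=L and i=i, OF ij(1)] ij(2) by simp
  show ?thesis
  proof (cases "Suc j < length (L i)")
    case True
    have "conc L (Suc n) = L i ! Suc j" using conc_eq[where L=L and i=i, OF True] ij(2) by simp
    then show ?thesis using F True c by simp
  next
    case False
    then have sj: "Suc j = length (L i)" using ij by simp
    have l0: "0 < length (L (Suc i))" using ne by simp
    have "Suc n = offs L (Suc i) + 0" using ij sj by simp
    then have "conc L (Suc n) = L (Suc i) ! 0" using conc_eq[where L=L and i="Suc i", OF l0] by simp
    moreover have "fst (L (Suc i) ! 0) = xs (Suc i)" using fpath_nth[OF P[of "Suc i"] l0] by simp
    ultimately show ?thesis using F sj c by simp
  qed
qed

context
  fixes T :: "('k, 'c1 + 'c2) pregraph" and t0 :: 'k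
  assumes pt: "is_pretree T t0"
begin

lemma pgT: "is_pregraph T" using pt by (simp add: is_pretree_def)

definition Pth :: "'k \<Rightarrow> ('k \<times> ('c1 + 'c2) \<times> 'k) list" where
  "Pth v = (THE p. fpath T t0 p v)"

definition gl :: "('k \<times> ('c1 + 'c2) \<times> 'k) list \<Rightarrow> 'k" where
  "gl p = foldl (\<lambda>acc e. if isl (fst (snd e)) then acc else snd (snd e)) t0 p"

definition GG :: "'k \<Rightarrow> 'k" where "GG v = gl (Pth v)"

lemma gl_Nil [simp]: "gl [] = t0" by (simp add: gl_def)
lemma gl_snoc [simp]: "gl (p @ [(a,c,b)]) = (if isl c then gl p else b)"
  by (simp add: gl_def)

lemma P_path: "v \<in> verts T \<Longrightarrow> fpath T t0 (Pth v) v"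
  unfolding Pth_def using pt by (simp add: is_pretree_def) (metis theI')

lemma P_unique: "fpath T t0 p v \<Longrightarrow> Pth v = p"
proof -
  assume h: "fpath T t0 p v"
  then have v: "v \<in> verts T" using fpath_verts[OF pgT] by blast
  then have "\<exists>!p. fpath T t0 p v" using pt by (simp add: is_pretree_def)
  then show ?thesis using h P_path[OF v] by blast
qed

lemma edge_verts: "(a,c,b) \<in> edges T \<Longrightarrow> a \<in> verts T \<and> b \<in> verts T"
  using pgT by (auto simp: is_pregraph_def)

lemma P_edge: "(a,c,b) \<in> edges T \<Longrightarrow> Pth b = Pth a @ [(a,c,b)]"
  using P_path edge_verts by (intro P_unique) (simp add: fpath_snoc[OF pgT])

lemma t0_in: "t0 \<in> verts T" using pt by (simp add: is_pretree_def)

lemma P_t0: "Pth t0 = []" using t0_in by (intro P_unique) simp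

lemma no_in_t0: "(a,c,t0) \<notin> edges T"
  using P_edge P_t0 by fastforce

lemma in_uniq: "(a,c,v) \<in> edges T \<Longrightarrow> (a',c',v) \<in> edges T \<Longrightarrow> a = a' \<and> c = c'"
proof -
  assume e: "(a,c,v) \<in> edges T" "(a',c',v) \<in> edges T"
  have "Pth a @ [(a,c,v)] = Pth a' @ [(a',c',v)]" using P_edge[OF e(1)] P_edge[OF e(2)] by simp
  then show ?thesis by simp
qed

lemma inc_T: "v \<in> verts T \<Longrightarrow> v \<noteq> t0 \<Longrightarrow> \<exists>a c. (a,c,v) \<in> edges T"
proof -
  assume v: "v \<in> verts T" "v \<noteq> t0"
  show ?thesis
  proof (cases "Pth v" rule: rev_exhaust)
    case Nil then show ?thesis using P_path[OF v(1)] v(2) by simp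
  next
    case (snoc q e)
    then show ?thesis using P_path[OF v(1)] by (cases e) (auto simp: fpath_snoc[OF pgT])
  qed
qed

lemma G_t0: "GG t0 = t0" by (simp add: GG_def P_t0)

lemma G_edge: "(a,c,b) \<in> edges T \<Longrightarrow> GG b = (if isl c then GG a else b)"
  by (simp add: GG_def P_edge)

lemma gl_cases: "fpath T t0 p v \<Longrightarrow> gl p = t0 \<or> (\<exists>a c. (a, Inr c, gl p) \<in> edges T)"
proof (induction p arbitrary: v rule: rev_induct)
  case Nil then show ?case by (simp only: gl_Nil simp_thms)
next
  case (snoc e p)
  obtain a c b where e: "e = (a,c,b)" by (cases e)
  have h: "fpath T t0 p a" "(a,c,b) \<in> edges T" using snoc.prems e by (auto simp: fpath_snoc[OF pgT])
  show ?case
  proof (cases "isl c")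
    case True then show ?thesis using snoc.IH[OF h(1)] e by simp
  next
    case False
    then obtain c2 where "c = Inr c2" by (cases c) auto
    then show ?thesis using h e by auto
  qed
qed

lemma G_path: "fpath T t0 p v \<Longrightarrow> \<exists>q. fpath T (gl p) q v \<and> (\<forall>e\<in>set q. isl (fst (snd e)))"
proof (induction p arbitrary: v rule: rev_induct)
  case Nil then show ?case unfolding gl_Nil by (intro exI[of _ "[]"]) auto
next
  case (snoc e p)
  obtain a c b where e: "e = (a,c,b)" by (cases e)
  have h: "fpath T t0 p a" "(a,c,b) \<in> edges T" "b = v" "b \<in> verts T"
    using snoc.prems e by (auto simp: fpath_snoc[OF pgT])
  show ?case
  proof (cases "isl c")
    case True
    obtain q where q: "fpath T (gl p) q a" "\<forall>e\<in>set q. isl (fst (snd e))" using snoc.IH[OF h(1)] by blast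
    have "fpath T (gl p) (q @ [(a,c,b)]) v" using q h by (simp add: fpath_snoc[OF pgT])
    then show ?thesis using q True e by (intro exI[of _ "q @ [(a,c,b)]"]) auto
  next
    case False
    then show ?thesis using h e by (intro exI[of _ "[]"]) auto
  qed
qed

lemma G_in: "v \<in> verts T \<Longrightarrow> GG v \<in> verts T"
  using G_path[OF P_path] fpath_verts[OF pgT] unfolding GG_def by blast

lemma G_G: "v \<in> verts T \<Longrightarrow> GG (GG v) = GG v"
proof -
  assume v: "v \<in> verts T"
  from gl_cases[OF P_path[OF v]] show ?thesis
  proof
    assume "gl (Pth v) = t0" then show ?thesis by (simp add: GG_def[of v] G_t0)
  next
    assume "\<exists>a c. (a, Inr c, gl (Pth v)) \<in> edges T"
    then obtain a c where "(a, Inr c, GG v) \<in> edges T" by (auto simp: GG_def)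
    then show ?thesis using G_edge by fastforce
  qed
qed

lemma G_depth: "v \<in> verts T \<Longrightarrow> length (Pth (GG v)) \<le> length (Pth v)"
proof -
  assume v: "v \<in> verts T"
  obtain q where q: "fpath T (GG v) q v" using G_path[OF P_path[OF v]] by (auto simp: GG_def)
  have "fpath T t0 (Pth (GG v) @ q) v"
    using q P_path[OF G_in[OF v]] by (auto simp: fpath_append[OF pgT])
  then have "Pth v = Pth (GG v) @ q" by (rule P_unique)
  then show ?thesis by simp
qed

definition T2 :: "('k, 'c2) pregraph" where
  "T2 = \<lparr> verts = GG ` verts T, edges = {(GG t, c2, t') | t c2 t'. (t, Inr c2, t') \<in> edges T} \<rparr>"

definition Blk :: "'k \<Rightarrow> ('k, 'c1) pregraph" where
  "Blk b = \<lparr> verts = {v \<in> verts T. GG v = b},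
             edges = {(a, c1, a') | a c1 a'. (a, Inl c1, a') \<in> edges T \<and> GG a = b} \<rparr>"

lemma T2_pretree: "is_pretree T2 t0"
proof (rule pretree_crit[where d = "\<lambda>v. length (Pth v)"])
  show "is_pregraph T2"
    unfolding is_pregraph_def
  proof (intro ballI)
    fix x assume "x \<in> edges T2"
    then obtain t c2 t' where x: "x = (GG t, c2, t')" and e: "(t, Inr c2, t') \<in> edges T"
      by (auto simp: T2_def)
    have "t \<in> verts T" "t' \<in> verts T" using edge_verts[OF e] by auto
    moreover have "GG t' = t'" using G_edge[OF e] by simp
    ultimately show "case x of (v, c, v') \<Rightarrow> v \<in> verts T2 \<and> v' \<in> verts T2"
      unfolding x T2_def by (metis image_eqI pregraph.select_convs(1) prod.case)
  qed
  show "t0 \<in> verts T2" unfolding T2_def using t0_in G_t0 by (metis image_eqI pregraph.select_convs(1))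
  show "(a, c, t0) \<notin> edges T2" for a c unfolding T2_def using no_in_t0 by auto
  show "\<exists>a c. (a, c, v) \<in> edges T2" if vT: "v \<in> verts T2" "v \<noteq> t0" for v
  proof -
    obtain u where u: "u \<in> verts T" "v = GG u" using vT by (auto simp: T2_def)
    obtain a c where "(a, Inr c, v) \<in> edges T"
      using gl_cases[OF P_path[OF u(1)]] u vT(2) by (auto simp: GG_def)
    then show ?thesis unfolding T2_def by auto
  qed
  show "a = a' \<and> c = c'" if e1: "(a, c, v) \<in> edges T2" and e2: "(a', c', v) \<in> edges T2" for a c v a' c'
  proof -
    obtain t where t: "a = GG t" "(t, Inr c, v) \<in> edges T" using e1 by (auto simp: T2_def)
    obtain t' where t': "a' = GG t'" "(t', Inr c', v) \<in> edges T" using e2 by (auto simp: T2_def)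
    show ?thesis using in_uniq[OF t(2) t'(2)] t t' by simp
  qed
  show "length (Pth a) < length (Pth b)" if e: "(a, c, b) \<in> edges T2" for a c b
  proof -
    obtain t where t: "a = GG t" "(t, Inr c, b) \<in> edges T" using e by (auto simp: T2_def)
    have "length (Pth (GG t)) \<le> length (Pth t)" using G_depth edge_verts t by blast
    then show ?thesis using P_edge[OF t(2)] t by simp
  qed
qed

lemma Blk_pretree:
  assumes b: "b \<in> GG ` verts T"
  shows "is_pretree (Blk b) b"
proof (rule pretree_crit[where d = "\<lambda>v. length (Pth v)"])
  obtain u where u: "u \<in> verts T" "b = GG u" using b by auto
  have bv: "b \<in> verts T" "GG b = b" using u G_in G_G by auto
  show "is_pregraph (Blk b)"
    unfolding is_pregraph_def
  proof (intro ballI)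
    fix x assume "x \<in> edges (Blk b)"
    then obtain a c1 a' where x: "x = (a, c1, a')" and e: "(a, Inl c1, a') \<in> edges T" and g: "GG a = b"
      by (auto simp: Blk_def)
    have "a \<in> verts T" "a' \<in> verts T" using edge_verts[OF e] by auto
    moreover have "GG a' = b" using G_edge[OF e] g by simp
    ultimately show "case x of (v, c, v') \<Rightarrow> v \<in> verts (Blk b) \<and> v' \<in> verts (Blk b)"
      unfolding x Blk_def using g by simp
  qed
  show "b \<in> verts (Blk b)" unfolding Blk_def using bv by simp
  show "(a, c, b) \<notin> edges (Blk b)" for a c
  proof
    assume "(a, c, b) \<in> edges (Blk b)"
    then have e: "(a, Inl c, b) \<in> edges T" by (auto simp: Blk_def)
    from gl_cases[OF P_path[OF u(1)]] show False
    proof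
      assume "gl (Pth u) = t0" then show False using e u no_in_t0 by (simp add: GG_def)
    next
      assume "\<exists>a c. (a, Inr c, gl (Pth u)) \<in> edges T"
      then obtain a' c' where "(a', Inr c', b) \<in> edges T" using u by (auto simp: GG_def)
      then show False using in_uniq e by blast
    qed
  qed
  show "\<exists>a c. (a, c, v) \<in> edges (Blk b)" if vB: "v \<in> verts (Blk b)" "v \<noteq> b" for v
  proof -
    have v: "v \<in> verts T" "GG v = b" using vB by (auto simp: Blk_def)
    have "v \<noteq> t0" using v vB(2) G_t0 by auto
    then obtain a c where e: "(a, c, v) \<in> edges T" using inc_T v by blast
    show ?thesis
    proof (cases c)
      case (Inl c1)
      then have "(a, c1, v) \<in> edges (Blk b)" using e G_edge[OF e] v unfolding Blk_def by auto
      then show ?thesis by blast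
    next
      case (Inr c2)
      then show ?thesis using G_edge[OF e] v vB(2) by simp
    qed
  qed
  show "a = a' \<and> c = c'" if e1: "(a, c, v) \<in> edges (Blk b)" and e2: "(a', c', v) \<in> edges (Blk b)" for a c v a' c'
  proof -
    have "(a, Inl c, v) \<in> edges T" "(a', Inl c', v) \<in> edges T" using e1 e2 by (auto simp: Blk_def)
    from in_uniq[OF this] show ?thesis by simp
  qed
  show "length (Pth a) < length (Pth b')" if e: "(a, c, b') \<in> edges (Blk b)" for a c b'
  proof -
    have "(a, Inl c, b') \<in> edges T" using e by (auto simp: Blk_def)
    from P_edge[OF this] show ?thesis by simp
  qed
qed

lemma Blk_sat:
  assumes sat: "satisfies T (lex_obj W1 W2)"
  shows "satisfies (Blk b) W1"
  unfolding satisfies_def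
proof (intro allI impI)
  fix vs cs
  assume E: "\<forall>i. (vs i, cs i, vs (Suc i)) \<in> edges (Blk b)"
  then have "\<forall>i. (vs i, (\<lambda>i. Inl (cs i) :: 'c1 + 'c2) i, vs (Suc i)) \<in> edges T"
    by (auto simp: Blk_def)
  then have "(\<lambda>i. Inl (cs i) :: 'c1 + 'c2) \<in> lex_obj W1 W2"
    using sat[unfolded satisfies_def, rule_format, of vs "\<lambda>i. Inl (cs i)"] by blast
  then have "sub1 (\<lambda>i. Inl (cs i) :: 'c1 + 'c2) \<in> W1" by (simp add: lex_obj_def)
  moreover have "sub1 (\<lambda>i. Inl (cs i) :: 'c1 + 'c2) = cs"
  proof
    fix n
    have "enumerate (range id) n = id n" by (rule enum_range) (simp add: strict_mono_def)
    then show "sub1 (\<lambda>i. Inl (cs i) :: 'c1 + 'c2) n = cs n" by (simp add: sub1_def)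
  qed
  ultimately show "cs \<in> W1" by simp
qed

lemma T2_sat:
  assumes sat: "satisfies T (lex_obj W1 W2)"
  shows "satisfies T2 W2"
  unfolding satisfies_def
proof (intro allI impI)
  fix vs cs
  assume E: "\<forall>i. (vs i, cs i, vs (Suc i)) \<in> edges T2"
  have "\<forall>i. \<exists>t. vs i = GG t \<and> (t, Inr (cs i), vs (Suc i)) \<in> edges T"
    using E by (auto simp: T2_def)
  then obtain t where t: "\<And>i. vs i = GG (t i)" "\<And>i. (t i, Inr (cs i), vs (Suc i)) \<in> edges T"
    by metis
  have "\<forall>i. \<exists>q. fpath T (GG (t i)) q (t i) \<and> (\<forall>e\<in>set q. isl (fst (snd e)))"
    using G_path[OF P_path] edge_verts t(2) unfolding GG_def by blast
  then obtain q where q: "\<And>i. fpath T (GG (t i)) (q i) (t i)" "\<And>i. \<forall>e\<in>set (q i). isl (fst (snd e))"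
    by metis
  define L where "L i = q i @ [(t i, Inr (cs i), vs (Suc i))]" for i
  have LP: "fpath T (vs i) (L i) (vs (Suc i))" for i
  proof -
    have "vs (Suc i) \<in> verts T" using edge_verts[OF t(2)[of i]] by simp
    then have "fpath T (t i) [(t i, Inr (cs i), vs (Suc i))] (vs (Suc i))" using t(2) by simp
    then show ?thesis unfolding L_def using q(1)[of i] t(1)[of i]
      by (auto simp: fpath_append[OF pgT])
  qed
  have ne: "\<forall>i. L i \<noteq> []" by (simp add: L_def)
  define w where "w n = fst (snd (conc L n))" for n
  define ys where "ys n = fst (conc L n)" for n
  have "(ys n, w n, ys (Suc n)) \<in> edges T" for n
    using conc_path[OF pgT LP ne, of n] unfolding w_def ys_def by (metis prod.collapse)
  then have wl: "w \<in> lex_obj W1 W2" using sat[unfolded satisfies_def, rule_format, of ys w] by blast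
  define f where "f i = offs L i + length (q i)" for i
  have Lf: "conc L (f i) = (t i, Inr (cs i), vs (Suc i))" for i
    using conc_eq[where L=L and i=i and j="length (q i)"] by (simp add: f_def L_def)
  have sm: "strict_mono f"
    unfolding strict_mono_Suc_iff by (simp add: f_def L_def)
  have rng: "{n. \<not> isl (w n)} = range f"
  proof (intro equalityI subsetI)
    fix n assume n: "n \<in> {n. \<not> isl (w n)}"
    obtain i j where ij: "j < length (L i)" "n = offs L i + j" using decomp[OF ne] by blast
    have cj: "conc L n = L i ! j" using conc_eq[where L=L and i=i, OF ij(1)] ij(2) by simp
    have "j = length (q i)"
    proof (rule ccontr)
      assume "j \<noteq> length (q i)"
      then have "j < length (q i)" using ij(1) by (simp add: L_def)
      then have "L i ! j \<in> set (q i)" by (simp add: L_def nth_append)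
      then show False using q(2) n cj by (auto simp: w_def)
    qed
    then show "n \<in> range f" using ij by (simp add: f_def)
  next
    fix n assume "n \<in> range f"
    then show "n \<in> {n. \<not> isl (w n)}" using Lf by (auto simp: w_def)
  qed
  have inf: "infinite (range f)"
    using sm strict_mono_imp_inj_on range_inj_infinite by blast
  have "sub2 w \<in> W2" using wl inf rng by (simp add: lex_obj_def)
  moreover have "sub2 w = cs"
  proof
    fix n show "sub2 w n = cs n"
      unfolding sub2_def rng enum_range[OF sm] using Lf by (simp add: w_def)
  qed
  ultimately show "cs \<in> W2" by simp
qed

lemma exists_morph:
  fixes \<kappa> :: "'k rel" and U1 :: "('v1, 'c1) pregraph" and U2 :: "('v2, 'c2) pregraph"
  assumes sat: "satisfies T (lex_obj W1 W2)" and card: "(card_of (verts T), \<kappa>) \<in> ordLess"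
    and u1: "universal \<kappa> W1 U1" and u2: "universal \<kappa> W2 U2"
  shows "\<exists>f. is_morphism f T (lex_graph U1 R1 U2 R2)"
proof -
  have sub2: "verts T2 \<subseteq> verts T" using G_in by (auto simp: T2_def)
  have c2: "(card_of (verts T2), \<kappa>) \<in> ordLess"
    using ordLeq_ordLess_trans[OF card_of_mono1[OF sub2] card] .
  obtain f2 where f2: "is_morphism f2 T2 U2"
    using u2 T2_pretree c2 T2_sat[OF sat] unfolding universal_def by blast
  have "\<forall>b \<in> GG ` verts T. \<exists>h. is_morphism h (Blk b) U1"
  proof
    fix b assume b: "b \<in> GG ` verts T"
    have sb: "verts (Blk b) \<subseteq> verts T" by (auto simp: Blk_def)
    have "(card_of (verts (Blk b)), \<kappa>) \<in> ordLess"
      using ordLeq_ordLess_trans[OF card_of_mono1[OF sb] card] .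
    then show "\<exists>h. is_morphism h (Blk b) U1"
      using u1 Blk_pretree[OF b] Blk_sat[OF sat] unfolding universal_def by blast
  qed
  then obtain H where H: "\<And>b. b \<in> GG ` verts T \<Longrightarrow> is_morphism (H b) (Blk b) U1"
    by metis
  define f where "f v = (H (GG v) v, f2 (GG v))" for v
  have fv: "H (GG v) v \<in> verts U1 \<and> f2 (GG v) \<in> verts U2" if v: "v \<in> verts T" for v
  proof
    have "v \<in> verts (Blk (GG v))" using v by (simp add: Blk_def)
    then show "H (GG v) v \<in> verts U1" using H[of "GG v"] v unfolding is_morphism_def by blast
    have "GG v \<in> verts T2" using v by (simp add: T2_def)
    then show "f2 (GG v) \<in> verts U2" using f2 unfolding is_morphism_def by blast
  qed
  have "is_morphism f T (lex_graph U1 R1 U2 R2)"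
    unfolding is_morphism_def
  proof (intro conjI ballI)
    fix v assume "v \<in> verts T"
    then show "f v \<in> verts (lex_graph U1 R1 U2 R2)" using fv by (simp add: f_def lex_graph_def)
  next
    fix x assume x: "x \<in> edges T"
    obtain a c b where abc: "x = (a,c,b)" by (cases x)
    have e: "(a,c,b) \<in> edges T" using x abc by simp
    have ab: "a \<in> verts T" "b \<in> verts T" using edge_verts[OF e] by auto
    have "(f a, c, f b) \<in> edges (lex_graph U1 R1 U2 R2)"
    proof (cases c)
      case (Inl c1)
      have g: "GG b = GG a" using G_edge[OF e] Inl by simp
      have "(a, c1, b) \<in> edges (Blk (GG a))" using e Inl by (simp add: Blk_def)
      then have "(H (GG a) a, c1, H (GG a) b) \<in> edges U1"
        using H[of "GG a"] ab unfolding is_morphism_def by blast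
      then show ?thesis using Inl g fv[OF ab(1)] fv[OF ab(2)] by (simp add: f_def lex_edge_Inl)
    next
      case (Inr c2)
      have g: "GG b = b" using G_edge[OF e] Inr by simp
      have "(GG a, c2, b) \<in> edges T2" using e Inr by (auto simp: T2_def)
      then have "(f2 (GG a), c2, f2 b) \<in> edges U2"
        using f2 unfolding is_morphism_def by blast
      then show ?thesis using Inr g fv[OF ab(1)] fv[OF ab(2)] by (simp add: f_def lex_edge_Inr)
    qed
    then show "case x of (v, c, v') \<Rightarrow> (f v, c, f v') \<in> edges (lex_graph U1 R1 U2 R2)"
      using abc by simp
  qed
  then show ?thesis by blast
qed

end

theorem theorem6p3:
  fixes W1 :: "(nat \<Rightarrow> 'c1) set" and W2 :: "(nat \<Rightarrow> 'c2) set"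
    and \<kappa> :: "'k rel"
    and U1 :: "('v1, 'c1) pregraph" and R1 :: "'v1 rel"
    and U2 :: "('v2, 'c2) pregraph" and R2 :: "'v2 rel"
  assumes "prefix_independent W1" and "prefix_independent W2"
    and "Card_order \<kappa>"
    and "well_monotone U1 R1" and "well_monotone U2 R2"
    and "universal \<kappa> W1 U1" and "universal \<kappa> W2 U2"
  shows "monotone_graph (lex_graph U1 R1 U2 R2) (lex_order U1 R1 U2 R2)
       \<and> universal \<kappa> (lex_obj W1 W2) (lex_graph U1 R1 U2 R2)"
proof
  show "monotone_graph (lex_graph U1 R1 U2 R2) (lex_order U1 R1 U2 R2)"
    using lex_monotone assms(4,5) by (auto simp: well_monotone_def)
  have g: "is_graph (lex_graph U1 R1 U2 R2)"
    using lex_is_graph assms(6,7) by (auto simp: universal_def)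
  have s: "satisfies (lex_graph U1 R1 U2 R2) (lex_obj W1 W2)"
    using lex_satisfies assms(1,4,5,6,7) by (auto simp: universal_def)
  show "universal \<kappa> (lex_obj W1 W2) (lex_graph U1 R1 U2 R2)"
    unfolding universal_def
  proof (intro conjI g s allI impI)
    fix T :: "('k, 'c1 + 'c2) pregraph" and t0
    assume h: "is_pretree T t0 \<and> (card_of (verts T), \<kappa>) \<in> ordLess \<and> satisfies T (lex_obj W1 W2)"
    show "\<exists>f. is_morphism f T (lex_graph U1 R1 U2 R2)"
      using exists_morph[of T t0 W1 W2 \<kappa> U1 U2 R1 R2] h assms(6,7) by blast
  qed
qed

end
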